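(* Let $Y$ be a random variable whose moment generating function $E[e^{tY}]$ exists for $|t|<r_0$ for some $r_0>0$. Let $(Y_j)_{j\ge1}$ be mutually independent copies of $Y$, $S_0=0$, $S_k=Y_1+\cdots+Y_k$ for $k\ge1$. Let $r$ be a positive integer. Define $\phi_n^Y(x,y)$ and $\phi_{n,r}^Y(x,y)$ by $$\Big(1+y\big(E[e^{Yt}]-1\big)\Big)^{x}=\sum_{n=0}^{\infty}\phi_n^Y(x,y)\frac{t^n}{n!},\qquad \Big(1+y\big(E[e^{Yt}]-1\big)\Big)^{x}e^{rt}=\sum_{n=0}^{\infty}\phi_{n,r}^Y(x,y)\frac{t^n}{n!}.$$ Then for all integers $m,n\ge0$, $$\phi_{m+n,r}^Y(x,y)=\sum_{i=0}^{n}\sum_{k=0}^{m}\frac{1}{k!}\binom{n}{i}(x)_k y^k\phi_i^Y(x-k,y)\sum_{j=k}^{m}\binom{m}{j}\sum_{l_1+\cdots+l_k=j}\binom{j}{l_1,\dots,l_k}E\Big[(S_k+r)^{n-i}\prod_{p=1}^{k}Y_p^{l_p}\Big]r^{m-j},$$ where the innermost sum runs over $k$-tuples $(l_1,\dots,l_k)$ of positive integers with sum $j$.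
   Context: $(x)_0=1$, $(x)_k=x(x-1)\cdots(x-k+1)$ for $k\ge1$. The power $(1+u)^x$ is understood via the binomial series $\sum_{k\ge0}\binom{x}{k}u^k$ and the defining identities are ones of power series in $t$; $x,y$ are variables. For $k=0$ the sum over $(l_1,\dots,l_k)$ equals $1$ if $j=0$ and $0$ otherwise (empty product equal to $1$). $\binom{j}{l_1,\dots,l_k}$ is the multinomial coefficient. *)

theory Defs
  imports "HOL-Probability.Probability" "HOL-Computational_Algebra.Formal_Power_Series"
    "HOL-Library.FuncSet"
begin

definition falling_fact :: "nat \<Rightarrow> real \<Rightarrow> real" where
  "falling_fact k x = (\<Prod>i<k. (x - of_nat i))"

text \<open>Formal power series of the moment generating function E[e^{tY}] in t:
  its n-th coefficient is E[Y^n]/n!.\<close>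
definition mgf_fps :: "'a measure \<Rightarrow> ('a \<Rightarrow> real) \<Rightarrow> real fps" where
  "mgf_fps M Y = Abs_fps (\<lambda>n. (\<integral>\<omega>. (Y \<omega>) ^ n \<partial>M) / fact n)"

text \<open>The power series (1 + y (E[e^{tY}] - 1))^x, where (1+u)^x is the binomial
  series sum_k (x choose k) u^k (formal composition; u has zero constant term).\<close>
definition phi_fps :: "'a measure \<Rightarrow> ('a \<Rightarrow> real) \<Rightarrow> real \<Rightarrow> real \<Rightarrow> real fps" where
  "phi_fps M Y x y = fps_binomial x oo (fps_const y * (mgf_fps M Y - 1))"

definition phi :: "'a measure \<Rightarrow> ('a \<Rightarrow> real) \<Rightarrow> nat \<Rightarrow> real \<Rightarrow> real \<Rightarrow> real" where
  "phi M Y n x y = fact n * fps_nth (phi_fps M Y x y) n"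

definition phi_r :: "'a measure \<Rightarrow> ('a \<Rightarrow> real) \<Rightarrow> nat \<Rightarrow> nat \<Rightarrow> real \<Rightarrow> real \<Rightarrow> real" where
  "phi_r M Y r n x y = fact n * fps_nth (phi_fps M Y x y * fps_exp (of_nat r)) n"

definition comps :: "nat \<Rightarrow> nat \<Rightarrow> (nat \<Rightarrow> nat) set" where
  "comps k j = {l \<in> {1..k} \<rightarrow>\<^sub>E {1..j}. (\<Sum>p\<in>{1..k}. l p) = j}"

definition multinom :: "nat \<Rightarrow> nat \<Rightarrow> (nat \<Rightarrow> nat) \<Rightarrow> real" where
  "multinom j k l = fact j / (\<Prod>p\<in>{1..k}. fact (l p))"

end

theory Submission
  imports Defs
begin

lemma exp_ge_term:
  fixes z :: real assumes "z \<ge> 0" shows "z ^ b / fact b \<le> exp z"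
proof -
  have s: "(\<lambda>n. z ^ n /\<^sub>R fact n) sums exp z" by (rule exp_converges)
  have "(\<Sum>n\<in>{b}. z ^ n /\<^sub>R fact n) \<le> (\<Sum>n. z ^ n /\<^sub>R fact n)"
    by (rule sum_le_suminf) (use s assms in \<open>auto simp: sums_iff\<close>)
  then show ?thesis using s by (simp add: sums_iff divide_inverse mult.commute)
qed

lemma gbin_deriv: "fps_deriv (fps_binomial (c::real)) = fps_const c * fps_binomial (c - 1)"
  by (simp add: fps_eq_iff gbinomial_absorption[symmetric] del: of_nat_Suc)

lemma Dn_nth: "fps_nth ((fps_deriv ^^ m) (f :: real fps)) n = fact (n + m) / fact n * fps_nth f (n + m)"
proof (induction m arbitrary: n)
  case 0 then show ?case by simp
next
  case (Suc m)
  have "fps_nth ((fps_deriv ^^ Suc m) f) n = of_nat (n+1) * fps_nth ((fps_deriv ^^ m) f) (n + 1)" by simp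
  also have "\<dots> = of_nat (n+1) * (fact (n + 1 + m) / fact (n+1) * fps_nth f (n + 1 + m))" by (simp add: Suc)
  also have "\<dots> = fact (n + Suc m) / fact n * fps_nth f (n + Suc m)"
    by (simp add: field_simps del: of_nat_Suc)
  finally show ?case .
qed

lemma finite_comps: "finite (comps k j)"
  unfolding comps_def by (rule finite_subset[of _ "{1..k} \<rightarrow>\<^sub>E {1..j}"]) (auto intro: finite_PiE)

lemma comps_0: "comps 0 j = (if j = 0 then {\<lambda>_. undefined} else {})"
  unfolding comps_def by auto

lemma comps_empty: assumes "j < k" shows "comps k j = {}"
proof -
  { fix l assume l: "l \<in> comps k j"
    then have "\<forall>p\<in>{1..k}. 1 \<le> l p" unfolding comps_def by (auto simp: PiE_def Pi_def)
    then have "(\<Sum>p\<in>{1..k}. (1::nat)) \<le> (\<Sum>p\<in>{1..k}. l p)" by (intro sum_mono) auto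
    with l assms have False unfolding comps_def by auto }
  then show ?thesis by blast
qed

lemma comps_Suc:
  "comps (Suc k) j = (\<lambda>(a,l). l(Suc k := a)) ` (SIGMA a:{1..j}. comps k (j-a))"
proof (intro equalityI subsetI)
  fix l assume l: "l \<in> comps (Suc k) j"
  define a where "a = l (Suc k)"
  define l' where "l' = l(Suc k := undefined)"
  have lE: "l \<in> {1..Suc k} \<rightarrow>\<^sub>E {1..j}" and ls: "(\<Sum>p\<in>{1..Suc k}. l p) = j"
    using l unfolding comps_def by auto
  have ins: "{1..Suc k} = insert (Suc k) {1..k}" by auto
  have s: "a + (\<Sum>p\<in>{1..k}. l' p) = j" using ls unfolding ins a_def l'_def by simp
  have a1: "a \<in> {1..j}" using lE a_def by auto
  have "l' \<in> comps k (j - a)"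
  proof -
    have h1: "l' \<in> {1..k} \<rightarrow>\<^sub>E {1..j - a}"
    proof (rule PiE_I)
      fix p assume p: "p \<in> {1..k}"
      have "l' p \<le> (\<Sum>p\<in>{1..k}. l' p)" by (rule member_le_sum) (use p in auto)
      moreover have "1 \<le> l' p" using lE p unfolding l'_def by (auto simp: PiE_def Pi_def)
      ultimately show "l' p \<in> {1..j - a}" using s by auto
    next
      fix p assume "p \<notin> {1..k}" then show "l' p = undefined"
        using lE unfolding l'_def by (auto simp: PiE_def extensional_def)
    qed
    have h2: "(\<Sum>p\<in>{1..k}. l' p) = j - a" using s by simp
    show ?thesis unfolding comps_def using h1 h2 by simp
  qed
  moreover have "l = l'(Suc k := a)" unfolding l'_def a_def by auto
  ultimately show "l \<in> (\<lambda>(a,l). l(Suc k := a)) ` (SIGMA a:{1..j}. comps k (j-a))"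
    using a1 by force
next
  fix l assume "l \<in> (\<lambda>(a,l). l(Suc k := a)) ` (SIGMA a:{1..j}. comps k (j-a))"
  then obtain a l' where a: "a \<in> {1..j}" and l': "l' \<in> comps k (j - a)" and l: "l = l'(Suc k := a)"
    by auto
  have lE: "l' \<in> {1..k} \<rightarrow>\<^sub>E {1..j-a}" and ls: "(\<Sum>p\<in>{1..k}. l' p) = j - a"
    using l' unfolding comps_def by auto
  have ins: "{1..Suc k} = insert (Suc k) {1..k}" by auto
  have "(\<Sum>p\<in>{1..k}. l p) = (\<Sum>p\<in>{1..k}. l' p)" unfolding l by (intro sum.cong) auto
  then have "(\<Sum>p\<in>{1..Suc k}. l p) = j" unfolding ins using ls a l by simp
  moreover have "l \<in> {1..Suc k} \<rightarrow>\<^sub>E {1..j}"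
    using lE a unfolding l by (auto simp: PiE_def Pi_def extensional_def)
  ultimately show "l \<in> comps (Suc k) j" unfolding comps_def by auto
qed

lemma comps_Suc_inj: "inj_on (\<lambda>(a,l). l(Suc k := a)) (SIGMA a:{1..j}. comps k (j-a))"
proof (rule inj_onI, clarify)
  fix a l b l' assume l: "l \<in> comps k (j - a)" and l': "l' \<in> comps k (j - b)"
    and eq: "l(Suc k := a) = l'(Suc k := b)"
  have "a = b" using fun_cong[OF eq, of "Suc k"] by simp
  moreover have "l = l'"
  proof
    fix p show "l p = l' p"
    proof (cases "p = Suc k")
      case True
      then have "p \<notin> {1..k}" by auto
      then show ?thesis using l l' unfolding comps_def by (auto simp: PiE_def extensional_def)
    next
      case False then show ?thesis using fun_cong[OF eq, of p] by simp
    qed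
  qed
  ultimately show "a = b \<and> l = l'" by simp
qed

definition Qc :: "real fps \<Rightarrow> nat \<Rightarrow> nat \<Rightarrow> real fps" where
  "Qc F k j = (\<Sum>l\<in>comps k j. fps_const (multinom j k l) * (\<Prod>p\<in>{1..k}. (fps_deriv ^^ l p) F))"

lemma Qc_0: "Qc F 0 j = (if j = 0 then 1 else 0)"
  by (simp add: Qc_def comps_0 multinom_def)

lemma Qc_empty: "j < k \<Longrightarrow> Qc F k j = 0"
  by (simp add: Qc_def comps_empty)

lemma prod_upd_Suc:
  fixes g :: "nat \<Rightarrow> 'b::comm_monoid_mult"
  shows "(\<Prod>p\<in>{1..Suc k}. g ((l(Suc k := a)) p)) = g a * (\<Prod>p\<in>{1..k}. g (l p))"
proof -
  have ins: "{1..Suc k} = insert (Suc k) {1..k}" by auto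
  have "(\<Prod>p\<in>{1..Suc k}. g ((l(Suc k := a)) p)) = g a * (\<Prod>p\<in>{1..k}. g ((l(Suc k := a)) p))"
    unfolding ins by (subst prod.insert) auto
  also have "(\<Prod>p\<in>{1..k}. g ((l(Suc k := a)) p)) = (\<Prod>p\<in>{1..k}. g (l p))"
    by (rule prod.cong) auto
  finally show ?thesis .
qed

lemma sum_upd_Suc:
  fixes g :: "nat \<Rightarrow> 'b::comm_monoid_add"
  shows "(\<Sum>p\<in>{1..Suc k}. g ((l(Suc k := a)) p)) = g a + (\<Sum>p\<in>{1..k}. g (l p))"
proof -
  have ins: "{1..Suc k} = insert (Suc k) {1..k}" by auto
  have "(\<Sum>p\<in>{1..Suc k}. g ((l(Suc k := a)) p)) = g a + (\<Sum>p\<in>{1..k}. g ((l(Suc k := a)) p))"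
    unfolding ins by (subst sum.insert) auto
  also have "(\<Sum>p\<in>{1..k}. g ((l(Suc k := a)) p)) = (\<Sum>p\<in>{1..k}. g (l p))"
    by (rule sum.cong) auto
  finally show ?thesis .
qed

lemma multinom_Suc:
  assumes "l \<in> comps k (j - a)" "a \<le> j"
  shows "multinom j (Suc k) (l(Suc k := a)) = real (j choose a) * multinom (j - a) k l"
proof -
  have ins: "{1..Suc k} = insert (Suc k) {1..k}" by auto
  have pr: "(\<Prod>p\<in>{1..Suc k}. fact ((l(Suc k := a)) p) :: real) = fact a * (\<Prod>p\<in>{1..k}. fact (l p))"
    by (rule prod_upd_Suc)
  have "(\<Prod>p\<in>{1..k}. fact (l p) :: real) \<noteq> 0" by (simp add: prod_zero_iff)
  then show ?thesis unfolding multinom_def pr binomial_fact[OF assms(2)]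
    by (simp add: field_simps)
qed

lemma Qc_Suc: "Qc F (Suc k) j = (\<Sum>a=1..j. fps_const (real (j choose a)) * (fps_deriv ^^ a) F * Qc F k (j - a))"
proof -
  have ins: "{1..Suc k} = insert (Suc k) {1..k}" by auto
  have "Qc F (Suc k) j = (\<Sum>(a,l)\<in>(SIGMA a:{1..j}. comps k (j-a)).
      fps_const (multinom j (Suc k) (l(Suc k := a))) * (\<Prod>p\<in>{1..Suc k}. (fps_deriv ^^ (l(Suc k := a)) p) F))"
    unfolding Qc_def comps_Suc by (subst sum.reindex[OF comps_Suc_inj]) (simp add: case_prod_unfold)
  also have "\<dots> = (\<Sum>a=1..j. \<Sum>l\<in>comps k (j-a).
      fps_const (multinom j (Suc k) (l(Suc k := a))) * (\<Prod>p\<in>{1..Suc k}. (fps_deriv ^^ (l(Suc k := a)) p) F))"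
    by (subst sum.Sigma) (auto simp: finite_comps)
  also have "\<dots> = (\<Sum>a=1..j. \<Sum>l\<in>comps k (j-a). fps_const (real (j choose a)) * (fps_deriv ^^ a) F *
      (fps_const (multinom (j - a) k l) * (\<Prod>p\<in>{1..k}. (fps_deriv ^^ l p) F)))"
  proof (intro sum.cong refl)
    fix a l assume a: "a \<in> {1..j}" and l: "l \<in> comps k (j - a)"
    have "(\<Prod>p\<in>{1..Suc k}. (fps_deriv ^^ (l(Suc k := a)) p) F) = (fps_deriv ^^ a) F * (\<Prod>p\<in>{1..k}. (fps_deriv ^^ l p) F)"
      by (rule prod_upd_Suc)
    then show "fps_const (multinom j (Suc k) (l(Suc k := a))) * (\<Prod>p\<in>{1..Suc k}. (fps_deriv ^^ (l(Suc k := a)) p) F) =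
      fps_const (real (j choose a)) * (fps_deriv ^^ a) F *
      (fps_const (multinom (j - a) k l) * (\<Prod>p\<in>{1..k}. (fps_deriv ^^ l p) F))"
      using multinom_Suc[OF l] a by (simp add: fps_const_mult[symmetric] del: fps_const_mult)
  qed
  also have "\<dots> = (\<Sum>a=1..j. fps_const (real (j choose a)) * (fps_deriv ^^ a) F * Qc F k (j - a))"
    unfolding Qc_def by (simp add: sum_distrib_left)
  finally show ?thesis .
qed

lemma Qc_Suc': "Qc F (Suc k) j = (\<Sum>b<j. fps_const (real (j choose Suc b)) * (fps_deriv ^^ Suc b) F * Qc F k (j - Suc b))"
  unfolding Qc_Suc image_Suc_lessThan[symmetric] by (subst sum.reindex) auto

lemma Qc_deriv: "fps_deriv (Qc F k j) = Qc F k (Suc j) - fps_const (of_nat k) * fps_deriv F * Qc F (k - 1) j"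
proof (induction k arbitrary: j)
  case 0
  then show ?case by (simp add: Qc_0)
next
  case (Suc k)
  define C where "C = (\<lambda>b. fps_const (real (j choose Suc b)))"
  define D where "D = (\<lambda>b. (fps_deriv ^^ b) F)"
  have D0: "D (Suc 0) = fps_deriv F" by (simp add: D_def)
  have DS: "fps_deriv (D b) = D (Suc b)" for b by (simp add: D_def)
  have QS: "Qc F (Suc k) j = (\<Sum>b<j. C b * D (Suc b) * Qc F k (j - Suc b))"
    unfolding Qc_Suc' C_def D_def ..
  have last: "fps_const (of_nat k) * (\<Sum>b<j. C b * D (Suc b) * Qc F (k - 1) (j - Suc b))
      = fps_const (of_nat k) * Qc F k j"
    by (cases k) (simp_all add: Qc_Suc' C_def D_def)
  have "fps_deriv (Qc F (Suc k) j) = (\<Sum>b<j. C b * (D (Suc (Suc b)) * Qc F k (j - Suc b)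
        + D (Suc b) * (Qc F k (Suc (j - Suc b)) - fps_const (of_nat k) * fps_deriv F * Qc F (k - 1) (j - Suc b))))"
    unfolding QS by (simp add: fps_deriv_sum Suc.IH DS C_def algebra_simps)
  also have "\<dots> = (\<Sum>b<j. C b * D (Suc (Suc b)) * Qc F k (j - Suc b)) + (\<Sum>b<j. C b * D (Suc b) * Qc F k (Suc (j - Suc b)))
      - fps_deriv F * (fps_const (of_nat k) * (\<Sum>b<j. C b * D (Suc b) * Qc F (k - 1) (j - Suc b)))"
    by (simp add: algebra_simps sum.distrib sum_subtractf sum_distrib_left)
  also have "\<dots> = (\<Sum>b<j. C b * D (Suc (Suc b)) * Qc F k (j - Suc b)) + (\<Sum>b<j. C b * D (Suc b) * Qc F k (Suc (j - Suc b)))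
      - fps_const (of_nat k) * fps_deriv F * Qc F k j"
    unfolding last by (simp add: algebra_simps)
  finally have L: "fps_deriv (Qc F (Suc k) j) = \<dots>" .
  have "Qc F (Suc k) (Suc j) = (\<Sum>b<Suc j. fps_const (real (j choose b)) * D (Suc b) * Qc F k (j - b))
     + (\<Sum>b<Suc j. fps_const (real (j choose Suc b)) * D (Suc b) * Qc F k (j - b))"
    unfolding Qc_Suc' D_def by (simp add: sum.distrib[symmetric] algebra_simps fps_const_add[symmetric] del: fps_const_add)
  also have "(\<Sum>b<Suc j. fps_const (real (j choose b)) * D (Suc b) * Qc F k (j - b))
     = fps_deriv F * Qc F k j + (\<Sum>b<j. C b * D (Suc (Suc b)) * Qc F k (j - Suc b))"
    by (subst sum.lessThan_Suc_shift) (simp add: C_def D0)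
  also have "(\<Sum>b<Suc j. fps_const (real (j choose Suc b)) * D (Suc b) * Qc F k (j - b))
     = (\<Sum>b<j. C b * D (Suc b) * Qc F k (Suc (j - Suc b)))"
    by (simp add: C_def Suc_diff_Suc)
  finally have R: "Qc F (Suc k) (Suc j) = fps_deriv F * Qc F k j + (\<Sum>b<j. C b * D (Suc (Suc b)) * Qc F k (j - Suc b))
     + (\<Sum>b<j. C b * D (Suc b) * Qc F k (Suc (j - Suc b)))" .
  show ?case unfolding L R by (simp add: algebra_simps fps_const_add[symmetric] del: fps_const_add)
qed

definition Pf :: "real fps \<Rightarrow> real \<Rightarrow> real \<Rightarrow> real fps" where
  "Pf F y x = fps_binomial x oo (fps_const y * (F - 1))"

lemma Pf_deriv:
  assumes "fps_nth F 0 = 1"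
  shows "fps_deriv (Pf F y x) = fps_const (x * y) * Pf F y (x - 1) * fps_deriv F"
proof -
  have G0: "fps_nth (fps_const y * (F - 1)) 0 = 0" using assms by simp
  show ?thesis unfolding Pf_def fps_compose_deriv[OF G0] gbin_deriv fps_compose_mult_distrib[OF G0]
    by (simp add: algebra_simps)
qed

lemma falling_fact_Suc: "falling_fact (Suc k) x = falling_fact k x * (x - real k)"
  by (simp add: falling_fact_def)

definition cf :: "real \<Rightarrow> real \<Rightarrow> nat \<Rightarrow> real" where
  "cf y x k = falling_fact k x * y ^ k / fact k"

lemma cf_Suc: "cf y x (Suc k) * real (Suc k) = cf y x k * (x - real k) * y"
  unfolding cf_def falling_fact_Suc by (simp add: field_simps del: of_nat_Suc)

lemma core:
  assumes F0: "fps_nth F 0 = 1"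
  shows "(fps_deriv ^^ j) (Pf F y x) = (\<Sum>k\<le>j. fps_const (cf y x k) * Pf F y (x - real k) * Qc F k j)"
proof (induction j)
  case 0
  then show ?case by (simp add: Qc_0 cf_def falling_fact_def)
next
  case (Suc j)
  define T where "T = (\<lambda>k. fps_const (cf y x k) * fps_const ((x - real k) * y) * fps_deriv F * Pf F y (x - real k - 1) * Qc F k j)"
  define U where "U = (\<lambda>k. fps_const (cf y x k) * fps_const (real k) * fps_deriv F * Pf F y (x - real k) * Qc F (k - 1) j)"
  have trm: "fps_deriv (fps_const (cf y x k) * Pf F y (x - real k) * Qc F k j) =
     fps_const (cf y x k) * Pf F y (x - real k) * Qc F k (Suc j) + T k - U k" for k
    unfolding T_def U_def Pf_deriv[OF F0] Qc_deriv fps_deriv_mult fps_deriv_mult_const_left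
    by (simp add: ring_distribs mult_ac del: fps_const_mult)
  have "(fps_deriv ^^ Suc j) (Pf F y x) = fps_deriv (\<Sum>k\<le>j. fps_const (cf y x k) * Pf F y (x - real k) * Qc F k j)"
    using Suc by simp
  also have "(\<Sum>k\<le>j. fps_const (cf y x k) * Pf F y (x - real k) * Qc F k j)
      = (\<Sum>k\<le>Suc j. fps_const (cf y x k) * Pf F y (x - real k) * Qc F k j)"
    by (simp add: Qc_empty)
  also have "fps_deriv \<dots> = (\<Sum>k\<le>Suc j. fps_const (cf y x k) * Pf F y (x - real k) * Qc F k (Suc j))
     + (\<Sum>k\<le>Suc j. T k) - (\<Sum>k\<le>Suc j. U k)"
    by (simp only: fps_deriv_sum trm sum.distrib sum_subtractf)
  also have "(\<Sum>k\<le>Suc j. T k) = (\<Sum>k\<le>j. T k)"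
    by (simp add: T_def Qc_empty)
  also have "(\<Sum>k\<le>Suc j. U k) = (\<Sum>k\<le>j. T k)"
  proof -
    have "(\<Sum>k\<le>Suc j. U k) = U 0 + (\<Sum>k\<le>j. U (Suc k))" by (rule sum.atMost_Suc_shift)
    also have "U 0 = 0" by (simp add: U_def)
    also have "(\<Sum>k\<le>j. U (Suc k)) = (\<Sum>k\<le>j. T k)"
    proof (rule sum.cong[OF refl])
      fix k
      have e1: "x - real (Suc k) = x - real k - 1" by simp
      have e2: "fps_const (cf y x (Suc k)) * fps_const (real (Suc k)) = fps_const (cf y x k) * fps_const ((x - real k) * y)"
        by (simp only: fps_const_mult cf_Suc mult.assoc)
      have "U (Suc k) = fps_const (cf y x (Suc k)) * fps_const (real (Suc k)) * fps_deriv F * Pf F y (x - real (Suc k)) * Qc F k j"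
        unfolding U_def by simp
      then show "U (Suc k) = T k" unfolding e1 e2 T_def .
    qed
    finally show ?thesis by simp
  qed
  finally show ?case by simp
qed

lemma deriv_exp_mult:
  "(fps_deriv ^^ m) (A * fps_exp (c::real)) =
     (\<Sum>j\<le>m. fps_const (real (m choose j) * c ^ (m - j)) * (fps_deriv ^^ j) A) * fps_exp c"
proof (induction m)
  case 0 then show ?case by simp
next
  case (Suc m)
  define g where "g = (\<lambda>j. (fps_deriv ^^ j) A)"
  have gS: "fps_deriv (g j) = g (Suc j)" for j by (simp add: g_def)
  define S where "S = (\<Sum>j\<le>m. fps_const (real (m choose j) * c ^ (m - j)) * g j)"
  have "(fps_deriv ^^ Suc m) (A * fps_exp c) = (fps_deriv S + fps_const c * S) * fps_exp c"
    using Suc by (simp add: S_def g_def algebra_simps)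
  also have "fps_deriv S = (\<Sum>j\<le>m. fps_const (real (m choose j) * c ^ (m - j)) * g (Suc j))"
    by (simp add: S_def fps_deriv_sum gS)
  also have "fps_const c * S = (\<Sum>j\<le>Suc m. fps_const (real (m choose j) * c ^ (Suc m - j)) * g j)"
  proof -
    have "fps_const c * S = (\<Sum>j\<le>m. fps_const (real (m choose j) * c ^ (Suc m - j)) * g j)"
      unfolding S_def sum_distrib_left
    proof (rule sum.cong[OF refl])
      fix j assume "j \<in> {..m}"
      then have "Suc m - j = Suc (m - j)" by auto
      then have sc: "c * (real (m choose j) * c ^ (m - j)) = real (m choose j) * c ^ (Suc m - j)" by simp
      show "fps_const c * (fps_const (real (m choose j) * c ^ (m - j)) * g j) =
        fps_const (real (m choose j) * c ^ (Suc m - j)) * g j"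
        by (simp only: mult.assoc[symmetric] fps_const_mult) (simp only: mult.assoc sc)
    qed
    then show ?thesis by simp
  qed
  also have "\<dots> = fps_const (c ^ Suc m) * g 0 + (\<Sum>j\<le>m. fps_const (real (m choose Suc j) * c ^ (m - j)) * g (Suc j))"
    by (subst sum.atMost_Suc_shift) simp
  also have "(\<Sum>j\<le>Suc m. fps_const (real (Suc m choose j) * c ^ (Suc m - j)) * g j)
     = fps_const (c ^ Suc m) * g 0 + (\<Sum>j\<le>m. fps_const (real (Suc m choose Suc j) * c ^ (m - j)) * g (Suc j))"
    by (subst sum.atMost_Suc_shift) simp
  then have "(\<Sum>j\<le>Suc m. fps_const (real (Suc m choose j) * c ^ (Suc m - j)) * g j)
     = fps_const (c ^ Suc m) * g 0 + (\<Sum>j\<le>m. fps_const (real (m choose j) * c ^ (m - j)) * g (Suc j))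
       + (\<Sum>j\<le>m. fps_const (real (m choose Suc j) * c ^ (m - j)) * g (Suc j))"
    by (simp add: ring_distribs sum.distrib fps_const_add[symmetric] del: fps_const_add)
  ultimately show ?case unfolding g_def by (simp add: algebra_simps)
qed

lemma moment_integrable:
  fixes Y :: "'a \<Rightarrow> real"
  assumes Ym: "Y \<in> borel_measurable M" and r0: "r0 > 0"
    and ex: "\<And>t. \<bar>t\<bar> < r0 \<Longrightarrow> integrable M (\<lambda>\<omega>. exp (t * Y \<omega>))"
  shows "integrable M (\<lambda>\<omega>. Y \<omega> ^ b)"
proof -
  define t where "t = r0 / 2"
  have t: "t > 0" "\<bar>t\<bar> < r0" "\<bar>-t\<bar> < r0" using r0 by (auto simp: t_def)
  have i: "integrable M (\<lambda>\<omega>. fact b / t ^ b * (exp (t * Y \<omega>) + exp ((-t) * Y \<omega>)))"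
    using ex[OF t(2)] ex[OF t(3)] by auto
  show ?thesis
  proof (rule Bochner_Integration.integrable_bound[OF i])
    show "(\<lambda>\<omega>. Y \<omega> ^ b) \<in> borel_measurable M" using Ym by measurable
    show "AE \<omega> in M. norm (Y \<omega> ^ b) \<le> norm (fact b / t ^ b * (exp (t * Y \<omega>) + exp ((-t) * Y \<omega>)))"
    proof (rule AE_I2)
      fix \<omega>
      have "(t * \<bar>Y \<omega>\<bar>) ^ b / fact b \<le> exp (t * \<bar>Y \<omega>\<bar>)" using t by (intro exp_ge_term) auto
      also have "exp (t * \<bar>Y \<omega>\<bar>) \<le> exp (t * Y \<omega>) + exp ((-t) * Y \<omega>)"
        by (cases "Y \<omega> \<ge> 0") (auto simp: abs_if add_increasing add_increasing2)
      finally have "t ^ b * \<bar>Y \<omega>\<bar> ^ b \<le> fact b * (exp (t * Y \<omega>) + exp ((-t) * Y \<omega>))"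
        by (simp add: power_mult_distrib divide_simps mult.commute)
      then have "\<bar>Y \<omega>\<bar> ^ b \<le> fact b / t ^ b * (exp (t * Y \<omega>) + exp ((-t) * Y \<omega>))"
        using t by (simp add: field_simps)
      then show "norm (Y \<omega> ^ b) \<le> norm (fact b / t ^ b * (exp (t * Y \<omega>) + exp ((-t) * Y \<omega>)))"
        using t by (simp add: power_abs)
    qed
  qed
qed

context prob_space
begin

lemma Ys_moment:
  fixes Y :: "'a \<Rightarrow> real" and Ys :: "nat \<Rightarrow> 'a \<Rightarrow> real"
  assumes Ym: "Y \<in> borel_measurable M" and r0: "r0 > 0"
    and ex: "\<And>t. \<bar>t\<bar> < r0 \<Longrightarrow> integrable M (\<lambda>\<omega>. exp (t * Y \<omega>))"
    and ind: "indep_vars (\<lambda>_. borel) Ys {1..}"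
    and dis: "\<And>j. j \<ge> 1 \<Longrightarrow> distr M borel (Ys j) = distr M borel Y"
    and p: "p \<ge> 1"
  shows "integrable M (\<lambda>\<omega>. Ys p \<omega> ^ b)" "(\<integral>\<omega>. Ys p \<omega> ^ b \<partial>M) = (\<integral>\<omega>. Y \<omega> ^ b \<partial>M)"
proof -
  have Ysm: "Ys p \<in> borel_measurable M" using ind p unfolding indep_vars_def by auto
  have fm: "(\<lambda>z::real. z ^ b) \<in> borel_measurable borel" by measurable
  have "integrable M (\<lambda>\<omega>. Ys p \<omega> ^ b) = integrable (distr M borel (Ys p)) (\<lambda>z. z ^ b)"
    by (rule integrable_distr_eq[OF Ysm fm, symmetric])
  also have "\<dots> = integrable (distr M borel Y) (\<lambda>z. z ^ b)" using dis p by simp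
  also have "\<dots> = integrable M (\<lambda>\<omega>. Y \<omega> ^ b)" by (rule integrable_distr_eq[OF Ym fm])
  finally show "integrable M (\<lambda>\<omega>. Ys p \<omega> ^ b)" using moment_integrable[OF Ym r0 ex] by simp
  have "(\<integral>\<omega>. Ys p \<omega> ^ b \<partial>M) = integral\<^sup>L (distr M borel (Ys p)) (\<lambda>z. z ^ b)"
    by (rule integral_distr[OF Ysm fm, symmetric])
  also have "\<dots> = integral\<^sup>L (distr M borel Y) (\<lambda>z. z ^ b)" using dis p by simp
  also have "\<dots> = (\<integral>\<omega>. Y \<omega> ^ b \<partial>M)" by (rule integral_distr[OF Ym fm])
  finally show "(\<integral>\<omega>. Ys p \<omega> ^ b \<partial>M) = (\<integral>\<omega>. Y \<omega> ^ b \<partial>M)" .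
qed

lemma monomial:
  fixes Y :: "'a \<Rightarrow> real" and Ys :: "nat \<Rightarrow> 'a \<Rightarrow> real"
  assumes Ym: "Y \<in> borel_measurable M" and r0: "r0 > 0"
    and ex: "\<And>t. \<bar>t\<bar> < r0 \<Longrightarrow> integrable M (\<lambda>\<omega>. exp (t * Y \<omega>))"
    and ind: "indep_vars (\<lambda>_. borel) Ys {1..}"
    and dis: "\<And>j. j \<ge> 1 \<Longrightarrow> distr M borel (Ys j) = distr M borel Y"
    and J: "finite J" "J \<subseteq> {1..}"
  shows "integrable M (\<lambda>\<omega>. \<Prod>p\<in>J. Ys p \<omega> ^ b p)"
    "(\<integral>\<omega>. (\<Prod>p\<in>J. Ys p \<omega> ^ b p) \<partial>M) = (\<Prod>p\<in>J. \<integral>\<omega>. Y \<omega> ^ b p \<partial>M)"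
proof -
  have i1: "indep_vars (\<lambda>_. borel) (\<lambda>p \<omega>. (\<lambda>z. z ^ b p) (Ys p \<omega>)) {1..}"
    by (rule indep_vars_compose2[OF ind]) measurable
  have i2: "indep_vars (\<lambda>_. borel) (\<lambda>p \<omega>. Ys p \<omega> ^ b p) J"
    using indep_vars_subset[OF i1 J(2)] by simp
  have ii: "integrable M (\<lambda>\<omega>. Ys p \<omega> ^ b p)" if "p \<in> J" for p
    using Ys_moment[OF Ym r0 ex ind dis, of p] that J by auto
  show "integrable M (\<lambda>\<omega>. \<Prod>p\<in>J. Ys p \<omega> ^ b p)"
    by (rule indep_vars_integrable[OF J(1) i2 ii])
  have "(\<integral>\<omega>. (\<Prod>p\<in>J. Ys p \<omega> ^ b p) \<partial>M) = (\<Prod>p\<in>J. \<integral>\<omega>. Ys p \<omega> ^ b p \<partial>M)"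
    by (rule indep_vars_lebesgue_integral[OF J(1) i2 ii])
  also have "\<dots> = (\<Prod>p\<in>J. \<integral>\<omega>. Y \<omega> ^ b p \<partial>M)"
    by (rule prod.cong[OF refl]) (use Ys_moment[OF Ym r0 ex ind dis] J in auto)
  finally show "(\<integral>\<omega>. (\<Prod>p\<in>J. Ys p \<omega> ^ b p) \<partial>M) = (\<Prod>p\<in>J. \<integral>\<omega>. Y \<omega> ^ b p \<partial>M)" .
qed

lemma mgf_deriv_nth:
  "fps_nth ((fps_deriv ^^ L) (mgf_fps M Y)) q = (\<integral>\<omega>. Y \<omega> ^ (q + L) \<partial>M) / fact q"
  unfolding Dn_nth by (simp add: mgf_fps_def)

lemma expect_gen:
  fixes Y :: "'a \<Rightarrow> real" and Ys :: "nat \<Rightarrow> 'a \<Rightarrow> real" and rr :: real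
  assumes Ym: "Y \<in> borel_measurable M" and r0: "r0 > 0"
    and ex: "\<And>t. \<bar>t\<bar> < r0 \<Longrightarrow> integrable M (\<lambda>\<omega>. exp (t * Y \<omega>))"
    and ind: "indep_vars (\<lambda>_. borel) Ys {1..}"
    and dis: "\<And>j. j \<ge> 1 \<Longrightarrow> distr M borel (Ys j) = distr M borel Y"
  shows "finite J \<Longrightarrow> J \<subseteq> {Suc k..} \<Longrightarrow>
    integrable M (\<lambda>\<omega>. ((\<Sum>p\<in>{1..k}. Ys p \<omega>) + rr) ^ c * (\<Prod>p\<in>{1..k}. Ys p \<omega> ^ l p) * (\<Prod>p\<in>J. Ys p \<omega> ^ b p)) \<and>
    (\<integral>\<omega>. ((\<Sum>p\<in>{1..k}. Ys p \<omega>) + rr) ^ c * (\<Prod>p\<in>{1..k}. Ys p \<omega> ^ l p) * (\<Prod>p\<in>J. Ys p \<omega> ^ b p) \<partial>M)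
      = fact c * fps_nth (fps_exp rr * (\<Prod>p\<in>{1..k}. (fps_deriv ^^ l p) (mgf_fps M Y))) c
          * (\<Prod>p\<in>J. \<integral>\<omega>. Y \<omega> ^ b p \<partial>M)"
proof (induction k arbitrary: J l b c)
  case 0
  have J1: "J \<subseteq> {1..}" using 0 by auto
  note mono = monomial[OF Ym r0 ex ind dis 0(1) J1]
  show ?case using mono by simp
next
  case (Suc k)
  let ?Sk = "\<lambda>\<omega>. (\<Sum>p\<in>{1..k}. Ys p \<omega>) + rr"
  let ?Pk = "\<lambda>\<omega>. (\<Prod>p\<in>{1..k}. Ys p \<omega> ^ l p)"
  let ?L = "l (Suc k)"
  define J' where "J' = insert (Suc k) J"
  define ba where "ba = (\<lambda>a. b(Suc k := (c - a) + ?L))"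
  define f where "f = (\<lambda>a \<omega>. ?Sk \<omega> ^ a * ?Pk \<omega> * (\<Prod>p\<in>J'. Ys p \<omega> ^ ba a p))"
  have J'fin: "finite J'" and J'sub: "J' \<subseteq> {Suc k..}" using Suc.prems by (auto simp: J'_def)
  have nin: "Suc k \<notin> J" using Suc.prems by auto
  have PJ': "(\<Prod>p\<in>J'. g p (ba a p)) = g (Suc k) (c - a + ?L) * (\<Prod>p\<in>J. g p (b p))" for g :: "nat \<Rightarrow> nat \<Rightarrow> real" and a
  proof -
    have "(\<Prod>p\<in>J'. g p (ba a p)) = g (Suc k) (c - a + ?L) * (\<Prod>p\<in>J. g p (ba a p))"
      unfolding J'_def using Suc.prems nin by (simp add: ba_def)
    also have "(\<Prod>p\<in>J. g p (ba a p)) = (\<Prod>p\<in>J. g p (b p))"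
      by (rule prod.cong) (use nin in \<open>auto simp: ba_def\<close>)
    finally show ?thesis .
  qed
  have IH: "integrable M (f a)" "integral\<^sup>L M (f a) = fact a * fps_nth (fps_exp rr * (\<Prod>p\<in>{1..k}. (fps_deriv ^^ l p) (mgf_fps M Y))) a
          * (\<Prod>p\<in>J'. \<integral>\<omega>. Y \<omega> ^ ba a p \<partial>M)" for a
    using Suc.IH[OF J'fin J'sub, of a l "ba a"] unfolding f_def by auto
  have pw: "((\<Sum>p\<in>{1..Suc k}. Ys p \<omega>) + rr) ^ c * (\<Prod>p\<in>{1..Suc k}. Ys p \<omega> ^ l p) * (\<Prod>p\<in>J. Ys p \<omega> ^ b p)
     = (\<Sum>a\<le>c. real (c choose a) * f a \<omega>)" for \<omega>
  proof -
    have "((\<Sum>p\<in>{1..Suc k}. Ys p \<omega>) + rr) ^ c = (?Sk \<omega> + Ys (Suc k) \<omega>) ^ c"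
      by (simp add: sum.cl_ivl_Suc add_ac)
    also have "\<dots> = (\<Sum>a\<le>c. real (c choose a) * ?Sk \<omega> ^ a * Ys (Suc k) \<omega> ^ (c - a))"
      by (rule binomial_ring)
    finally have e1: "((\<Sum>p\<in>{1..Suc k}. Ys p \<omega>) + rr) ^ c = \<dots>" .
    have e2: "(\<Prod>p\<in>{1..Suc k}. Ys p \<omega> ^ l p) = ?Pk \<omega> * Ys (Suc k) \<omega> ^ ?L"
      by (simp add: prod.cl_ivl_Suc)
    have e3: "f a \<omega> = ?Sk \<omega> ^ a * ?Pk \<omega> * (Ys (Suc k) \<omega> ^ (c - a + ?L) * (\<Prod>p\<in>J. Ys p \<omega> ^ b p))" for a
      unfolding f_def PJ'[of "\<lambda>p e. Ys p \<omega> ^ e"] ..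
    show ?thesis unfolding e1 e2 e3 sum_distrib_right
      by (rule sum.cong[OF refl], simp only: power_add, simp add: mult_ac)
  qed
  have int: "integrable M (\<lambda>\<omega>. \<Sum>a\<le>c. real (c choose a) * f a \<omega>)"
    using IH(1) by auto
  have "(\<integral>\<omega>. (\<Sum>a\<le>c. real (c choose a) * f a \<omega>) \<partial>M) = (\<Sum>a\<le>c. real (c choose a) * integral\<^sup>L M (f a))"
    using IH(1) by simp
  also have "\<dots> = (\<Sum>a\<le>c. real (c choose a) * (fact a * fps_nth (fps_exp rr * (\<Prod>p\<in>{1..k}. (fps_deriv ^^ l p) (mgf_fps M Y))) a
          * ((\<integral>\<omega>. Y \<omega> ^ (c - a + ?L) \<partial>M) * (\<Prod>p\<in>J. \<integral>\<omega>. Y \<omega> ^ b p \<partial>M))))"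
    unfolding IH(2) PJ'[of "\<lambda>p e. \<integral>\<omega>. Y \<omega> ^ e \<partial>M"] ..
  also have "\<dots> = fact c * fps_nth (fps_exp rr * (\<Prod>p\<in>{1..Suc k}. (fps_deriv ^^ l p) (mgf_fps M Y))) c
          * (\<Prod>p\<in>J. \<integral>\<omega>. Y \<omega> ^ b p \<partial>M)"
  proof -
    have "fps_nth (fps_exp rr * (\<Prod>p\<in>{1..Suc k}. (fps_deriv ^^ l p) (mgf_fps M Y))) c
       = (\<Sum>i=0..c. fps_nth (fps_exp rr * (\<Prod>p\<in>{1..k}. (fps_deriv ^^ l p) (mgf_fps M Y))) i *
            ((\<integral>\<omega>. Y \<omega> ^ (c - i + ?L) \<partial>M) / fact (c - i)))"
      by (simp add: prod.cl_ivl_Suc mult.assoc[symmetric] fps_mult_nth mgf_deriv_nth)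
    then show ?thesis
      by (simp add: sum_distrib_left sum_distrib_right atLeast0AtMost binomial_fact field_simps)
  qed
  finally show ?case using int pw by simp
qed

lemma nth_const_mid: "fps_nth (A * (fps_const a * B)) c = a * fps_nth (A * B) (c::nat)" for A B :: "real fps"
proof -
  have eq: "A * (fps_const a * B) = fps_const a * (A * B)" by (rule mult.left_commute)
  show ?thesis unfolding eq fps_mult_left_const_nth ..
qed

lemma S_eq:
  fixes Y :: "'a \<Rightarrow> real" and Ys :: "nat \<Rightarrow> 'a \<Rightarrow> real" and rr :: real
  assumes Ym: "Y \<in> borel_measurable M" and r0: "r0 > 0"
    and ex: "\<And>t. \<bar>t\<bar> < r0 \<Longrightarrow> integrable M (\<lambda>\<omega>. exp (t * Y \<omega>))"
    and ind: "indep_vars (\<lambda>_. borel) Ys {1..}"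
    and dis: "\<And>j. j \<ge> 1 \<Longrightarrow> distr M borel (Ys j) = distr M borel Y"
  shows "fact c * fps_nth (Qc (mgf_fps M Y) k j * fps_exp rr) c =
    (\<Sum>l\<in>comps k j. multinom j k l *
       (\<integral>\<omega>. ((\<Sum>p\<in>{1..k}. Ys p \<omega>) + rr) ^ c * (\<Prod>p\<in>{1..k}. (Ys p \<omega>) ^ (l p)) \<partial>M))"
proof -
  have "fps_nth (Qc (mgf_fps M Y) k j * fps_exp rr) c = (\<Sum>l\<in>comps k j. multinom j k l *
     fps_nth (fps_exp rr * (\<Prod>p\<in>{1..k}. (fps_deriv ^^ l p) (mgf_fps M Y))) c)"
    unfolding Qc_def sum_distrib_right fps_sum_nth by (simp only: mult.commute[of _ "fps_exp rr"] nth_const_mid)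
  then show ?thesis
    using expect_gen[OF Ym r0 ex ind dis, where J="{}" and k=k and c=c and rr=rr] by (simp add: sum_distrib_left mult_ac)
qed

end

lemma mgf0: "prob_space M \<Longrightarrow> fps_nth (mgf_fps M Y) 0 = 1"
  by (simp add: mgf_fps_def prob_space.prob_space)

theorem theorem2p5:
  fixes M :: "'a measure" and Y :: "'a \<Rightarrow> real" and Ys :: "nat \<Rightarrow> 'a \<Rightarrow> real"
    and r0 :: real and r m n :: nat and x y :: real
  assumes "prob_space M"
    and "Y \<in> borel_measurable M"
    and "r0 > 0"
    and "\<And>t. \<bar>t\<bar> < r0 \<Longrightarrow> integrable M (\<lambda>\<omega>. exp (t * Y \<omega>))"
    and "prob_space.indep_vars M (\<lambda>_. borel) Ys {1..}"
    and "\<And>j. j \<ge> 1 \<Longrightarrow> distr M borel (Ys j) = distr M borel Y"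
    and "r > 0"
  shows "phi_r M Y r (m + n) x y =
    (\<Sum>i=0..n. \<Sum>k=0..m. (1 / fact k) * real (n choose i) * falling_fact k x * y ^ k
        * phi M Y i (x - real k) y
        * (\<Sum>j=k..m. real (m choose j) *
             (\<Sum>l\<in>comps k j. multinom j k l *
                (\<integral>\<omega>. ((\<Sum>p\<in>{1..k}. Ys p \<omega>) + real r) ^ (n - i)
                        * (\<Prod>p\<in>{1..k}. (Ys p \<omega>) ^ (l p)) \<partial>M))
             * real r ^ (m - j)))"
proof -
  define Mf where "Mf = mgf_fps M Y"
  define E where "E = fps_exp (real r)"
  define S where "S = (\<lambda>k j c. (\<Sum>l\<in>comps k j. multinom j k l *
                (\<integral>\<omega>. ((\<Sum>p\<in>{1..k}. Ys p \<omega>) + real r) ^ c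
                        * (\<Prod>p\<in>{1..k}. (Ys p \<omega>) ^ (l p)) \<partial>M)))"
  have M0: "fps_nth Mf 0 = 1" unfolding Mf_def by (rule mgf0[OF assms(1)])
  have Seq: "fact c * fps_nth (Qc Mf k j * E) c = S k j c" for k j c
    unfolding S_def Mf_def E_def by (rule prob_space.S_eq[OF assms(1,2,3,4,5,6)])
  have S0: "j < k \<Longrightarrow> S k j c = 0" for k j c by (simp add: S_def comps_empty)
  have phiP: "phi M Y i z y = fact i * fps_nth (Pf Mf y z) i" for i z
    by (simp add: phi_def phi_fps_def Pf_def Mf_def)
  have prodn: "fact n * fps_nth (A * B) n = (\<Sum>i=0..n. real (n choose i) * (fact i * fps_nth A i) * (fact (n - i) * fps_nth B (n - i)))"
    for A B :: "real fps"
    unfolding fps_mult_nth sum_distrib_left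
    by (rule sum.cong[OF refl]) (simp add: binomial_fact field_simps)
  have "phi_r M Y r (m + n) x y = fact n * fps_nth ((fps_deriv ^^ m) (Pf Mf y x * E)) n"
    by (simp add: phi_r_def phi_fps_def Pf_def Mf_def E_def Dn_nth add.commute)
  also have "(fps_deriv ^^ m) (Pf Mf y x * E) =
      (\<Sum>j\<le>m. \<Sum>k\<le>m. fps_const (real (m choose j) * real r ^ (m - j) * cf y x k) * (Pf Mf y (x - real k) * (Qc Mf k j * E)))"
  proof -
    have "(fps_deriv ^^ m) (Pf Mf y x * E) =
      (\<Sum>j\<le>m. fps_const (real (m choose j) * real r ^ (m - j)) * (fps_deriv ^^ j) (Pf Mf y x)) * E"
      unfolding E_def by (rule deriv_exp_mult)
    also have "\<dots> = (\<Sum>j\<le>m. fps_const (real (m choose j) * real r ^ (m - j)) *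
         (\<Sum>k\<le>m. fps_const (cf y x k) * Pf Mf y (x - real k) * Qc Mf k j)) * E"
    proof (intro arg_cong2[where f="(*)"] sum.cong refl)
      fix j assume j: "j \<in> {..m}"
      have "(fps_deriv ^^ j) (Pf Mf y x) = (\<Sum>k\<le>j. fps_const (cf y x k) * Pf Mf y (x - real k) * Qc Mf k j)"
        by (rule core[OF M0])
      also have "\<dots> = (\<Sum>k\<le>m. fps_const (cf y x k) * Pf Mf y (x - real k) * Qc Mf k j)"
        by (rule sum.mono_neutral_left) (use j in \<open>auto simp: Qc_empty\<close>)
      finally show "(fps_deriv ^^ j) (Pf Mf y x) = \<dots>" .
    qed
    also have "\<dots> = (\<Sum>j\<le>m. \<Sum>k\<le>m. fps_const (real (m choose j) * real r ^ (m - j) * cf y x k) * (Pf Mf y (x - real k) * (Qc Mf k j * E)))"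
      by (simp add: sum_distrib_left sum_distrib_right mult_ac fps_const_mult[symmetric] del: fps_const_mult)
    finally show ?thesis .
  qed
  also have "fact n * fps_nth (\<Sum>j\<le>m. \<Sum>k\<le>m. fps_const (real (m choose j) * real r ^ (m - j) * cf y x k) * (Pf Mf y (x - real k) * (Qc Mf k j * E))) n
     = (\<Sum>j\<le>m. \<Sum>k\<le>m. real (m choose j) * real r ^ (m - j) * cf y x k * (\<Sum>i=0..n. real (n choose i) * phi M Y i (x - real k) y * S k j (n - i)))"
  proof -
    have step: "fact n * fps_nth (fps_const c * (Pf Mf y (x - real k) * (Qc Mf k j * E))) n
        = c * (\<Sum>i=0..n. real (n choose i) * phi M Y i (x - real k) y * S k j (n - i))" for c k j
    proof -
      have "fact n * fps_nth (fps_const c * (Pf Mf y (x - real k) * (Qc Mf k j * E))) n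
          = c * (fact n * fps_nth (Pf Mf y (x - real k) * (Qc Mf k j * E)) n)" by simp
      also have "\<dots> = c * (\<Sum>i=0..n. real (n choose i) * phi M Y i (x - real k) y * S k j (n - i))"
        unfolding prodn phiP Seq ..
      finally show ?thesis .
    qed
    show ?thesis by (simp only: fps_sum_nth sum_distrib_left step)
  qed
  also have "\<dots> = (\<Sum>i=0..n. \<Sum>k=0..m. (1 / fact k) * real (n choose i) * falling_fact k x * y ^ k
        * phi M Y i (x - real k) y * (\<Sum>j=k..m. real (m choose j) * S k j (n - i) * real r ^ (m - j)))"
  proof -
    have ext: "(\<Sum>j=k..m. real (m choose j) * S k j c * real r ^ (m - j)) = (\<Sum>j\<le>m. real (m choose j) * S k j c * real r ^ (m - j))" for k c
      by (rule sum.mono_neutral_left) (auto simp: S0)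
    define g where "g = (\<lambda>i j k. real (m choose j) * real r ^ (m - j) * cf y x k *
       (real (n choose i) * phi M Y i (x - real k) y * S k j (n - i)))"
    have "(\<Sum>j\<le>m. \<Sum>k\<le>m. real (m choose j) * real r ^ (m - j) * cf y x k * (\<Sum>i=0..n. real (n choose i) * phi M Y i (x - real k) y * S k j (n - i)))
        = (\<Sum>j\<le>m. \<Sum>k\<le>m. \<Sum>i\<le>n. g i j k)"
      by (simp add: g_def sum_distrib_left atLeast0AtMost)
    also have "\<dots> = (\<Sum>k\<le>m. \<Sum>j\<le>m. \<Sum>i\<le>n. g i j k)" by (rule sum.swap)
    also have "\<dots> = (\<Sum>k\<le>m. \<Sum>i\<le>n. \<Sum>j\<le>m. g i j k)" by (rule sum.cong[OF refl], rule sum.swap)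
    also have "\<dots> = (\<Sum>i\<le>n. \<Sum>k\<le>m. \<Sum>j\<le>m. g i j k)" by (rule sum.swap)
    also have "\<dots> = (\<Sum>i=0..n. \<Sum>k=0..m. (1 / fact k) * real (n choose i) * falling_fact k x * y ^ k
        * phi M Y i (x - real k) y * (\<Sum>j=k..m. real (m choose j) * S k j (n - i) * real r ^ (m - j)))"
      unfolding ext atLeast0AtMost
      by (intro sum.cong refl, simp add: sum_distrib_left, intro sum.cong refl) (simp add: g_def cf_def field_simps)
    finally show ?thesis .
  qed
  finally show ?thesis unfolding S_def .
qed

end
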